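(* Let $X$ be a complete separable metric space without isolated points and $f:X\to X$ a non-singular map. Then $f$ is not topologically ergodic; that is, there is a set $V\subset X$ with $f^{-1}(V)=V$ which is neither meager nor residual.
   Context: A set is meager if it is a countable union of nowhere dense sets, residual if its complement is meager. $f$ is non-singular if $f^{-1}(M)$ is meager for every meager $M$. $f$ is topologically ergodic if every set $V$ with $f^{-1}(V)=V$ (no measurability assumed) is meager or residual. *)

theory Defs
  imports "HOL-Analysis.Analysis"
begin

definition nowhere_dense :: "'a::topological_space set \<Rightarrow> bool" where
  "nowhere_dense S \<longleftrightarrow> interior (closure S) = {}"

definition meager :: "'a::topological_space set \<Rightarrow> bool" where
  "meager S \<longleftrightarrow> (\<exists>F. countable F \<and> (\<forall>N\<in>F. nowhere_dense N) \<and> S = \<Union>F)"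

definition residual :: "'a::topological_space set \<Rightarrow> bool" where
  "residual S \<longleftrightarrow> meager (- S)"

definition non_singular :: "('a::topological_space \<Rightarrow> 'a) \<Rightarrow> bool" where
  "non_singular f \<longleftrightarrow> (\<forall>M. meager M \<longrightarrow> meager (f -` M))"

definition topologically_ergodic :: "('a::topological_space \<Rightarrow> 'a) \<Rightarrow> bool" where
  "topologically_ergodic f \<longleftrightarrow> (\<forall>V. f -` V = V \<longrightarrow> meager V \<or> residual V)"

end

theory Submission
  imports Defs
begin

lemma nowhere_dense_subset: "nowhere_dense N \<Longrightarrow> T \<subseteq> N \<Longrightarrow> nowhere_dense T"
  unfolding nowhere_dense_def
  by (metis closure_mono interior_mono subset_empty)

lemma meager_subset:
  assumes "meager S" "T \<subseteq> S" shows "meager T"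
proof -
  obtain F where F: "countable F" "\<forall>N\<in>F. nowhere_dense N" "S = \<Union>F"
    using assms(1) unfolding meager_def by blast
  have "countable ((\<lambda>N. N \<inter> T) ` F)" using F(1) by simp
  moreover have "\<forall>N\<in>(\<lambda>N. N \<inter> T) ` F. nowhere_dense N"
    using F(2) nowhere_dense_subset by blast
  moreover have "T = \<Union>((\<lambda>N. N \<inter> T) ` F)" using F(3) assms(2) by blast
  ultimately show ?thesis unfolding meager_def by blast
qed

lemma meager_Union:
  assumes "countable A" "\<And>S. S \<in> A \<Longrightarrow> meager S" shows "meager (\<Union>A)"
proof -
  have ex: "\<forall>S\<in>A. \<exists>F. countable F \<and> (\<forall>N\<in>F. nowhere_dense N) \<and> S = \<Union>F"
    using assms(2) unfolding meager_def by blast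
  then obtain G where G0: "\<forall>S\<in>A. countable (G S) \<and> (\<forall>N\<in>G S. nowhere_dense N) \<and> S = \<Union>(G S)"
    using bchoice[OF ex] by blast
  have G: "\<And>S. S \<in> A \<Longrightarrow> countable (G S) \<and> (\<forall>N\<in>G S. nowhere_dense N) \<and> S = \<Union>(G S)"
    using G0 by blast
  have "countable (\<Union>S\<in>A. G S)" using G assms(1) by blast
  moreover have "\<forall>N\<in>(\<Union>S\<in>A. G S). nowhere_dense N" using G by blast
  moreover have "\<Union>A = \<Union>(\<Union>S\<in>A. G S)"
  proof -
    have Geq: "S = \<Union>(G S)" if "S \<in> A" for S using G that by blast
    have "\<Union>(\<Union>S\<in>A. G S) = (\<Union>S\<in>A. \<Union>(G S))" by blast
    also have "\<dots> = (\<Union>S\<in>A. S)" by (rule SUP_cong) (simp_all add: Geq[symmetric])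
    finally show ?thesis by simp
  qed
  ultimately show ?thesis unfolding meager_def by blast
qed

lemma meager_UN:
  assumes "countable I" "\<And>i. i \<in> I \<Longrightarrow> meager (A i)" shows "meager (\<Union>i\<in>I. A i)"
  using meager_Union[of "A ` I"] assms by auto

lemma meager_Un: "meager A \<Longrightarrow> meager B \<Longrightarrow> meager (A \<union> B)"
  using meager_Union[of "{A, B}"] by auto

lemma meager_singleton: "meager {x::'a::{perfect_space,t1_space}}"
  unfolding meager_def nowhere_dense_def
  by (rule exI[of _ "{{x}}"]) auto

lemma not_meager_UNIV: "\<not> meager (UNIV :: 'a::polish_space set)"
proof
  assume "meager (UNIV :: 'a set)"
  then obtain F :: "'a set set" where F: "countable F" "\<forall>N\<in>F. nowhere_dense N" "UNIV = \<Union>F"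
    unfolding meager_def by blast
  have "euclidean interior_of \<Union>(closure ` F) = {}"
    apply (rule Baire_category_alt)
    using completely_metrizable_space_euclidean F(1,2)
    by (auto simp: nowhere_dense_def)
  moreover have "\<Union>(closure ` F) = UNIV" using F(3) closure_subset by blast
  ultimately show False by simp
qed

lemma meager_funpow_vimage:
  assumes "non_singular f" "meager M" shows "meager ((f ^^ n) -` M)"
proof (induction n)
  case 0 then show ?case using assms by simp
next
  case (Suc n)
  have eq: "(f ^^ Suc n) -` M = f -` ((f ^^ n) -` M)"
    unfolding funpow_Suc_right by auto
  have "meager (f -` ((f ^^ n) -` M))" using Suc assms(1) unfolding non_singular_def by blast
  then show ?case unfolding eq .
qed

theorem proposition3p2:
  fixes f :: "'a::{polish_space, perfect_space} \<Rightarrow> 'a"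
  assumes "non_singular f"
  shows "\<not> topologically_ergodic f"
proof
  assume erg: "topologically_ergodic f"
  define R where "R x y \<longleftrightarrow> (\<exists>n m. (f ^^ n) x = (f ^^ m) y)" for x y
  have Rsym: "R x y \<Longrightarrow> R y x" for x y
    unfolding R_def by (elim exE) (rule exI, rule exI, erule sym)
  have Rtrans: "R x y \<Longrightarrow> R y z \<Longrightarrow> R x z" for x y z
  proof -
    assume "R x y" "R y z"
    then obtain n m k l where a: "(f ^^ n) x = (f ^^ m) y" and b: "(f ^^ k) y = (f ^^ l) z"
      unfolding R_def by blast
    have "(f ^^ (k + n)) x = (f ^^ k) ((f ^^ m) y)" by (simp add: funpow_add a)
    also have "\<dots> = (f ^^ (k + m)) y" by (simp add: funpow_add)
    also have "\<dots> = (f ^^ (m + k)) y" by (simp only: add.commute)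
    also have "\<dots> = (f ^^ m) ((f ^^ k) y)" by (simp add: funpow_add)
    also have "\<dots> = (f ^^ (m + l)) z" by (simp add: funpow_add b)
    finally show "R x z" unfolding R_def by blast
  qed
  have Rrefl: "R x x" for x unfolding R_def by blast
  have Rf: "R x (f x)" for x unfolding R_def
    by (rule exI[of _ 1], rule exI[of _ 0]) simp
  define r where "r x = (SOME y. R x y)" for x
  have Rr: "R x (r x)" for x unfolding r_def by (rule someI, rule Rrefl)
  have rR: "R x y \<Longrightarrow> r x = r y" for x y
  proof -
    assume "R x y"
    have "(\<lambda>z. R x z) = (\<lambda>z. R y z)"
    proof
      fix z show "R x z = R y z"
      proof
        assume "R x z" then show "R y z" by (rule Rtrans[OF Rsym[OF \<open>R x y\<close>]])
      next
        assume "R y z" then show "R x z" by (rule Rtrans[OF \<open>R x y\<close>])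
      qed
    qed
    then show ?thesis unfolding r_def by simp
  qed
  have rf: "r (f x) = r x" for x using rR[OF Rf] by simp
  obtain \<B> :: "'a set set" where B: "countable \<B>" "topological_basis \<B>"
    using ex_countable_basis by blast
  define V where "V U = {x. r x \<in> U}" for U
  have Vinv: "f -` V U = V U" for U unfolding V_def using rf by auto
  define t where "t U = residual (V U)" for U
  define S where "S = (\<Inter>U\<in>\<B>. {x. (r x \<in> U) = t U})"
  have res: "meager (- {x. (r x \<in> U) = t U})" for U
  proof (cases "t U")
    case True
    then have "residual (V U)" using t_def by simp
    moreover have "{x. (r x \<in> U) = t U} = V U" using True V_def by auto
    ultimately show ?thesis by (simp add: residual_def)
  next
    case False
    then have "meager (V U)" using erg Vinv t_def unfolding topologically_ergodic_def by blast
    moreover have "- {x. (r x \<in> U) = t U} = V U" using False V_def by auto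
    ultimately show ?thesis by simp
  qed
  have mS: "meager (- S)"
  proof -
    have "- S = (\<Union>U\<in>\<B>. - {x. (r x \<in> U) = t U})" unfolding S_def by blast
    moreover have "meager (\<Union>U\<in>\<B>. - {x. (r x \<in> U) = t U})"
      by (rule meager_UN[OF B(1)]) (rule res)
    ultimately show ?thesis by simp
  qed
  have Sne: "S \<noteq> {}"
  proof
    assume "S = {}"
    then show False using mS not_meager_UNIV[where 'a='a] by simp
  qed
  then obtain x0 where x0: "x0 \<in> S" by blast
  have same: "r y = r x0" if "y \<in> S" for y
  proof (rule ccontr)
    assume ne: "r y \<noteq> r x0"
    have "open (- {r x0})" by (rule open_Compl, rule closed_singleton)
    moreover have "r y \<in> - {r x0}" using ne by simp
    ultimately obtain U where U: "U \<in> \<B>" "r y \<in> U" "U \<subseteq> - {r x0}"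
      by (rule topological_basisE[OF B(2)])
    have "(r y \<in> U) = t U" "(r x0 \<in> U) = t U" using that x0 U(1) unfolding S_def by auto
    then show False using U by auto
  qed
  have "S \<subseteq> (\<Union>(n, m)\<in>UNIV. (f ^^ n) -` {(f ^^ m) (r x0)})"
  proof
    fix y assume "y \<in> S"
    then have e: "r y = r x0" by (rule same)
    have "R y (r y)" by (rule Rr)
    then have "R y (r x0)" unfolding e .
    then show "y \<in> (\<Union>(n, m)\<in>UNIV. (f ^^ n) -` {(f ^^ m) (r x0)})"
      unfolding R_def by auto
  qed
  moreover have "meager (\<Union>(n, m)\<in>UNIV. (f ^^ n) -` {(f ^^ m) (r x0)})"
    by (rule meager_UN) (auto intro: meager_funpow_vimage[OF assms] meager_singleton)
  ultimately have "meager S" using meager_subset by blast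
  then have "meager (S \<union> - S)" using mS meager_Un by blast
  then show False using not_meager_UNIV[where 'a='a] by simp
qed

end
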